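(* Let $\gamma\sim\mathcal{FB}(\bar\gamma;\kappa,\mu,m,\eta,\varrho)$ be a Fluctuating Beckmann random variable (as defined in the context). Then for every real $s\le 0$ its moment generating function $M_\gamma(s)=\mathbb{E}[e^{s\gamma}]$ is $$ M_\gamma(s)=\frac{1}{\left(1-\frac{2\eta\,\bar\gamma s}{\mu(1+\eta)(1+\kappa)}\right)^{\mu/2}\left(1-\frac{2\,\bar\gamma s}{\mu(1+\eta)(1+\kappa)}\right)^{\mu/2}} \left[1-\frac{1}{m}\left(\frac{\mu\kappa\frac{\varrho^2}{1+\varrho^2}(1+\eta)\bar\gamma s}{(1+\eta)(1+\kappa)\mu-2\eta\bar\gamma s}+\frac{\mu\kappa\frac{1}{1+\varrho^2}(1+\eta)\bar\gamma s}{(1+\eta)(1+\kappa)\mu-2\bar\gamma s}\right)\right]^{-m}. $$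
   Context: Fluctuating Beckmann (FB) model. Let $\mu$ be a positive integer, $\sigma_x,\sigma_y>0$, $m>0$, $\bar\gamma>0$, and let $p_1,\dots,p_\mu,q_1,\dots,q_\mu$ be real numbers with $p^2:=\sum_{i=1}^\mu p_i^2$, $q^2:=\sum_{i=1}^\mu q_i^2$, and $q^2>0$. Let $X_1,\dots,X_\mu,Y_1,\dots,Y_\mu,\xi$ be mutually independent random variables with $X_i\sim\mathcal N(0,\sigma_x^2)$, $Y_i\sim\mathcal N(0,\sigma_y^2)$, and $\xi\ge 0$ Nakagami-$m$ distributed with $\mathbb E[\xi^2]=1$, i.e. $\xi^2$ is Gamma distributed with shape $m$ and scale $1/m$ (density of $\xi$: $f_\xi(x)=\frac{2m^m}{\Gamma(m)}x^{2m-1}e^{-mx^2}$, $x>0$). Set $W=\sum_{i=1}^\mu\big[(X_i+p_i\xi)^2+(Y_i+q_i\xi)^2\big]$ and $\gamma=\bar\gamma\,W/\mathbb E[W]$ (so $\mathbb E[\gamma]=\bar\gamma$). The parameters are $\kappa=\frac{p^2+q^2}{\mu(\sigma_x^2+\sigma_y^2)}$, $\varrho^2=p^2/q^2$ (with $\varrho\ge0$), $\eta=\sigma_x^2/\sigma_y^2$. We then write $\gamma\sim\mathcal{FB}(\bar\gamma;\kappa,\mu,m,\eta,\varrho)$. *)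

theory Defs
  imports "HOL-Probability.Probability"
begin

text \<open>Nakagami-m density with E[xi^2] = 1 (shape m, spread 1).\<close>
definition nakagami_density :: "real \<Rightarrow> real \<Rightarrow> real" where
  "nakagami_density m x =
     (if x > 0 then 2 * m powr m / Gamma m * x powr (2 * m - 1) * exp (- m * x\<^sup>2) else 0)"

text \<open>Index set gathering the variables X_1..X_mu, Y_1..Y_mu, xi into one family,
  used to express mutual independence.\<close>
definition fb_index :: "nat \<Rightarrow> (nat + nat + unit) set" where
  "fb_index \<mu> = Inl ` {..<\<mu>} \<union> (Inr \<circ> Inl) ` {..<\<mu>} \<union> {Inr (Inr ())}"

definition fb_family ::
  "(nat \<Rightarrow> 'a \<Rightarrow> real) \<Rightarrow> (nat \<Rightarrow> 'a \<Rightarrow> real) \<Rightarrow> ('a \<Rightarrow> real) \<Rightarrow> nat + nat + unit \<Rightarrow> 'a \<Rightarrow> real" where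
  "fb_family X Y \<xi> k = (case k of Inl i \<Rightarrow> X i | Inr (Inl i) \<Rightarrow> Y i | Inr (Inr _) \<Rightarrow> \<xi>)"

end

theory Submission
  imports Defs
begin
lemma half_gamma:
  fixes a b :: real assumes a: "a > 0" and b: "b > 0"
  shows "(\<integral>\<^sup>+x. ennreal (indicator {0..} x * x powr (2*a-1) * exp (-b*x\<^sup>2)) \<partial>lborel)
         = ennreal (Gamma a / (2 * b powr a))"
proof -
  define f where "f = (\<lambda>t::real. indicator {0..} t * t powr (a-1) / exp t)"
  have fm[measurable]: "f \<in> borel_measurable borel" unfolding f_def by measurable
  have der: "((\<lambda>x. b*x\<^sup>2) has_real_derivative 2*b*x) (at x)" for x
    by (auto intro!: derivative_eq_intros)
  have sbm: "set_borel_measurable borel {c..d} f" for c d :: real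
    unfolding set_borel_measurable_def by measurable
  have sub: "(\<integral>\<^sup>+x. f x * indicator {0..b*(real n)\<^sup>2} x \<partial>lborel) =
        (\<integral>\<^sup>+x. f (b*x\<^sup>2) * (2*b*x) * indicator {0..real n} x \<partial>lborel)" for n :: nat
    using nn_integral_substitution[where f=f and g="\<lambda>x. b*x\<^sup>2" and a=0 and b="real n" and g'="\<lambda>x. 2*b*x", OF sbm der] b
    by (auto intro!: continuous_intros)
  have L1: "(\<lambda>n. \<integral>\<^sup>+x. f x * indicator {0..b*(real n)\<^sup>2} x \<partial>lborel) \<longlonglongrightarrow> (\<integral>\<^sup>+x. f x \<partial>lborel)"
  proof (intro nn_integral_LIMSEQ)
    show "incseq (\<lambda>n x. ennreal (f x * indicator {0..b*(real n)\<^sup>2} x))"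
      unfolding incseq_def le_fun_def
    proof (intro allI impI)
      fix m n :: nat and x :: real assume "m \<le> n"
      hence mono: "b*(real m)\<^sup>2 \<le> b*(real n)\<^sup>2"
        using b by (intro mult_left_mono power_mono) auto
      have f0: "0 \<le> f x" unfolding f_def by (auto split: split_indicator)
      show "ennreal (f x * indicator {0..b*(real m)\<^sup>2} x) \<le> ennreal (f x * indicator {0..b*(real n)\<^sup>2} x)"
        using mono f0 by (intro ennreal_leI mult_left_mono) (auto split: split_indicator)
    qed
    fix x :: real
    obtain N :: nat where N: "x / b \<le> real N" using real_arch_simple by blast
    have "eventually (\<lambda>n. ennreal (f x * indicator {0..b*(real n)\<^sup>2} x) = ennreal (f x)) sequentially"
    proof (rule eventually_sequentiallyI[of "N+1"])
      fix n assume "N + 1 \<le> n"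
      hence "x \<le> b * (real n)\<^sup>2" using N b
      proof -
        have "real N \<le> real n" "1 \<le> real n" using \<open>N + 1 \<le> n\<close> by auto
        moreover have "real n * 1 \<le> real n * real n" using \<open>1 \<le> real n\<close> by (intro mult_left_mono) auto
        ultimately have "real N \<le> (real n)\<^sup>2" unfolding power2_eq_square by linarith
        hence "b * real N \<le> b * (real n)\<^sup>2" using b by simp
        moreover have "x \<le> b * real N" using N b by (simp add: divide_le_eq mult.commute)
        ultimately show ?thesis by linarith
      qed
      thus "ennreal (f x * indicator {0..b*(real n)\<^sup>2} x) = ennreal (f x)"
        unfolding f_def by (auto split: split_indicator)
    qed
    thus "(\<lambda>n. ennreal (f x * indicator {0..b*(real n)\<^sup>2} x)) \<longlonglongrightarrow> ennreal (f x)"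
      by (rule tendsto_eventually)
  qed measurable
  have L2: "(\<lambda>n. \<integral>\<^sup>+x. f (b*x\<^sup>2) * (2*b*x) * indicator {0..real n} x \<partial>lborel) \<longlonglongrightarrow>
      (\<integral>\<^sup>+x. f (b*x\<^sup>2) * (2*b*x) * indicator {0..} x \<partial>lborel)"
  proof (intro nn_integral_LIMSEQ)
    show "incseq (\<lambda>n x. ennreal (f (b*x\<^sup>2) * (2*b*x) * indicator {0..real n} x))"
      unfolding incseq_def le_fun_def
    proof (intro allI impI)
      fix m n :: nat and x :: real assume "m \<le> n"
      have f0: "0 \<le> f (b*x\<^sup>2) * (2*b*x) * indicator {0..} x" using b
        unfolding f_def by (auto split: split_indicator)
      show "ennreal (f (b*x\<^sup>2) * (2*b*x) * indicator {0..real m} x) \<le> ennreal (f (b*x\<^sup>2) * (2*b*x) * indicator {0..real n} x)"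
        using \<open>m \<le> n\<close> f0 by (intro ennreal_leI) (auto split: split_indicator)
    qed
    fix x :: real
    have "eventually (\<lambda>n. ennreal (f (b*x\<^sup>2) * (2*b*x) * indicator {0..real n} x) =
       ennreal (f (b*x\<^sup>2) * (2*b*x) * indicator {0..} x)) sequentially"
    proof (rule eventually_sequentiallyI[of "nat \<lceil>x\<rceil>"])
      fix n assume "nat \<lceil>x\<rceil> \<le> n"
      hence "x \<le> real n" by linarith
      thus "ennreal (f (b*x\<^sup>2) * (2*b*x) * indicator {0..real n} x) =
       ennreal (f (b*x\<^sup>2) * (2*b*x) * indicator {0..} x)"
        by (auto split: split_indicator)
    qed
    thus "(\<lambda>n. ennreal (f (b*x\<^sup>2) * (2*b*x) * indicator {0..real n} x)) \<longlonglongrightarrow>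
       ennreal (f (b*x\<^sup>2) * (2*b*x) * indicator {0..} x)"
      by (rule tendsto_eventually)
  qed measurable
  have eq: "(\<integral>\<^sup>+x. f x \<partial>lborel) = (\<integral>\<^sup>+x. f (b*x\<^sup>2) * (2*b*x) * indicator {0..} x \<partial>lborel)"
    using LIMSEQ_unique[OF L1 L2[folded sub]] .
  have G: "(\<integral>\<^sup>+x. f x \<partial>lborel) = ennreal (Gamma a)"
    using Gamma_conv_nn_integral_real[OF a] unfolding f_def by simp
  have pt: "ennreal (f (b*x\<^sup>2) * (2*b*x) * indicator {0..} x) =
       ennreal (2 * b powr a) * ennreal (indicator {0..} x * x powr (2*a-1) * exp (-b*x\<^sup>2))" for x
  proof (cases "x > 0")
    case True
    have h1: "(b*x\<^sup>2) powr (a-1) = b powr (a-1) * (x\<^sup>2) powr (a-1)"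
      using b powr_mult[of b "x\<^sup>2" "a-1"] by simp
    have "(x\<^sup>2) powr (a-1) * x = exp ((a-1) * ln (x\<^sup>2)) * exp (ln x)"
      using True by (simp add: powr_def)
    also have "\<dots> = exp ((a-1) * ln (x\<^sup>2) + ln x)" by (simp only: exp_add)
    also have "\<dots> = exp ((2*a-1) * ln x)"
      using True by (intro arg_cong[where f=exp]) (simp add: ln_mult power2_eq_square algebra_simps)
    also have "\<dots> = x powr (2*a-1)" using True by (simp add: powr_def)
    finally have h2: "(x\<^sup>2) powr (a-1) * x = x powr (2*a-1)" .
    have h3: "b powr (a-1) * b = b powr a" using b by (simp add: powr_diff)
    have "(b*x\<^sup>2) powr (a-1) * (2*b*x) = 2 * (b powr (a-1) * b) * ((x\<^sup>2) powr (a-1) * x)"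
      unfolding h1 by (simp add: algebra_simps)
    also have "\<dots> = 2 * b powr a * x powr (2*a-1)" unfolding h2 h3 ..
    finally have e: "(b*x\<^sup>2) powr (a-1) * (2*b*x) = 2 * b powr a * x powr (2*a-1)" .
    have "f (b*x\<^sup>2) * (2*b*x) * indicator {0..} x = (2 * b powr a) * (indicator {0..} x * x powr (2*a-1) * exp (-b*x\<^sup>2))"
    proof -
      have ind: "indicator {0..} (b*x\<^sup>2) = (1::real)" "indicator {0..} x = (1::real)"
        using True b by auto
      have "f (b*x\<^sup>2) * (2*b*x) * indicator {0..} x = ((b*x\<^sup>2) powr (a-1) * (2*b*x)) * inverse (exp (b*x\<^sup>2))"
        unfolding f_def ind by (simp add: divide_inverse)
      also have "\<dots> = (2 * b powr a * x powr (2*a-1)) * inverse (exp (b*x\<^sup>2))" unfolding e ..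
      finally show ?thesis unfolding ind by (simp add: exp_minus)
    qed
    thus ?thesis using b by (metis ennreal_mult' powr_ge_zero mult_nonneg_nonneg zero_le_numeral mult.commute)
  next
    case False
    thus ?thesis unfolding f_def by (auto split: split_indicator)
  qed
  have "ennreal (Gamma a) = ennreal (2 * b powr a) * (\<integral>\<^sup>+x. ennreal (indicator {0..} x * x powr (2*a-1) * exp (-b*x\<^sup>2)) \<partial>lborel)"
    unfolding G[symmetric] eq pt by (rule nn_integral_cmult) measurable
  moreover have "ennreal (Gamma a) = ennreal (2 * b powr a) * ennreal (Gamma a / (2 * b powr a))"
    using b by (simp add: ennreal_mult'[symmetric])
  ultimately have Z: "ennreal (2 * b powr a) * (\<integral>\<^sup>+x. ennreal (indicator {0..} x * x powr (2*a-1) * exp (-b*x\<^sup>2)) \<partial>lborel)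
       = ennreal (2 * b powr a) * ennreal (Gamma a / (2 * b powr a))" by simp
  have c: "ennreal (1 / (2 * b powr a)) * ennreal (2 * b powr a) = 1"
    using b by (simp add: ennreal_mult''[symmetric])
  have "ennreal (1 / (2 * b powr a)) * (ennreal (2 * b powr a) * (\<integral>\<^sup>+x. ennreal (indicator {0..} x * x powr (2*a-1) * exp (-b*x\<^sup>2)) \<partial>lborel))
       = ennreal (1 / (2 * b powr a)) * (ennreal (2 * b powr a) * ennreal (Gamma a / (2 * b powr a)))"
    using Z by simp
  thus ?thesis unfolding mult.assoc[symmetric] c by simp

qed
lemma nakagami_pt:
  fixes m x c :: real assumes m: "m > 0"
  shows "ennreal (nakagami_density m x) * ennreal (x powr c * exp (A*x\<^sup>2)) =
    ennreal (2 * m powr m / Gamma m) * ennreal (indicator {0..} x * x powr (2*m-1+c) * exp (-(m-A)*x\<^sup>2))"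
proof (cases "x > 0")
  case True
  have g: "Gamma m > 0" using m by (simp add: Gamma_real_pos)
  have "nakagami_density m x * (x powr c * exp (A*x\<^sup>2)) =
     (2 * m powr m / Gamma m) * (indicator {0..} x * x powr (2*m-1+c) * exp (-(m-A)*x\<^sup>2))"
  proof -
    have e1: "x powr (2*m-1+c) = x powr (2*m-1) * x powr c" by (rule powr_add)
    have e2: "exp (-(m-A)*x\<^sup>2) = exp (-m*x\<^sup>2) * exp (A*x\<^sup>2)"
      by (simp add: exp_add[symmetric] algebra_simps)
    show ?thesis using True unfolding nakagami_density_def e1 e2 by simp
  qed
  thus ?thesis using g m True
    by (simp add: ennreal_mult''[symmetric])
next
  case False
  then show ?thesis unfolding nakagami_density_def
    by (cases "x = 0") (auto split: split_indicator)
qed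

lemma nakagami_mgf:
  fixes m A :: real assumes m: "m > 0" and A: "A < m"
  shows "(\<integral>\<^sup>+x. ennreal (exp (A*x\<^sup>2)) \<partial>density lborel (\<lambda>x. ennreal (nakagami_density m x)))
     = ennreal ((m / (m - A)) powr m)"
proof -
  have g: "Gamma m > 0" using m by (simp add: Gamma_real_pos)
  have "(\<integral>\<^sup>+x. ennreal (exp (A*x\<^sup>2)) \<partial>density lborel (\<lambda>x. ennreal (nakagami_density m x)))
     = (\<integral>\<^sup>+x. ennreal (nakagami_density m x) * ennreal (x powr 0 * exp (A*x\<^sup>2)) \<partial>lborel)"
    by (subst nn_integral_density) (auto simp: nakagami_density_def intro!: nn_integral_cong)
  also have "\<dots> = (\<integral>\<^sup>+x. ennreal (2 * m powr m / Gamma m) * ennreal (indicator {0..} x * x powr (2*m-1) * exp (-(m-A)*x\<^sup>2)) \<partial>lborel)"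
    using nakagami_pt[OF m, of _ 0 A] by simp
  also have "\<dots> = ennreal (2 * m powr m / Gamma m) * ennreal (Gamma m / (2 * (m-A) powr m))"
    using half_gamma[of m "m-A"] m A by (subst nn_integral_cmult) (auto simp: algebra_simps)
  also have "\<dots> = ennreal ((m / (m - A)) powr m)"
    using m A g by (simp add: ennreal_mult''[symmetric] powr_divide g[THEN less_imp_neq, symmetric])
  finally show ?thesis .
qed

lemma nakagami_moment2:
  fixes m :: real assumes m: "m > 0"
  shows "(\<integral>\<^sup>+x. ennreal (x\<^sup>2) \<partial>density lborel (\<lambda>x. ennreal (nakagami_density m x))) = 1"
proof -
  have g: "Gamma m > 0" using m by (simp add: Gamma_real_pos)
  have "(\<integral>\<^sup>+x. ennreal (x\<^sup>2) \<partial>density lborel (\<lambda>x. ennreal (nakagami_density m x)))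
     = (\<integral>\<^sup>+x. ennreal (nakagami_density m x) * ennreal (x powr 2 * exp (0*x\<^sup>2)) \<partial>lborel)"
    by (subst nn_integral_density) (auto simp: nakagami_density_def intro!: nn_integral_cong)
  also have "\<dots> = (\<integral>\<^sup>+x. ennreal (2 * m powr m / Gamma m) * ennreal (indicator {0..} x * x powr (2*(m+1)-1) * exp (-m*x\<^sup>2)) \<partial>lborel)"
    using nakagami_pt[OF m, of _ 2 0] by (simp add: algebra_simps)
  also have "\<dots> = ennreal (2 * m powr m / Gamma m) * ennreal (Gamma (m+1) / (2 * m powr (m+1)))"
    using half_gamma[of "m+1" m] m by (subst nn_integral_cmult) auto
  also have "\<dots> = 1"
  proof -
    have "Gamma (m+1) = m * Gamma m" using m by (intro Gamma_plus1) (auto elim!: nonpos_Ints_cases)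
    thus ?thesis using m g by (simp add: ennreal_mult''[symmetric] powr_add g[THEN less_imp_neq, symmetric])
  qed
  finally show ?thesis .
qed

lemma nn_integral_normal_density:
  fixes \<sigma> :: real assumes "\<sigma> > 0"
  shows "(\<integral>\<^sup>+x. ennreal (normal_density \<mu> \<sigma> x) \<partial>lborel) = 1"
  using assms by (subst nn_integral_eq_integral) auto

lemma gauss_mgf:
  fixes \<sigma> t a :: real assumes s: "\<sigma> > 0" and t: "t \<le> 0"
  shows "(\<integral>\<^sup>+x. ennreal (exp (t*(x+a)\<^sup>2)) \<partial>density lborel (\<lambda>x. ennreal (normal_density 0 \<sigma> x)))
     = ennreal ((1 - 2*t*\<sigma>\<^sup>2) powr (-1/2) * exp (t*a\<^sup>2/(1 - 2*t*\<sigma>\<^sup>2)))"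
proof -
  define C where "C = 1 - 2*t*\<sigma>\<^sup>2"
  have C: "C \<ge> 1" unfolding C_def using t by (simp add: mult_nonpos_nonneg)
  hence C0: "C > 0" by simp
  define \<sigma>' where "\<sigma>' = \<sigma> / sqrt C"
  define \<mu>' where "\<mu>' = 2*t*\<sigma>\<^sup>2*a/C"
  have s'0: "\<sigma>' > 0" unfolding \<sigma>'_def using s C0 by simp
  have s2: "\<sigma>'\<^sup>2 = \<sigma>\<^sup>2/C" unfolding \<sigma>'_def using C0 by (simp add: power_divide)
  define K where "K = 1 / sqrt C * exp (t*a\<^sup>2/C)"
  have K: "K = C powr (-1/2) * exp (t*a\<^sup>2/C)" unfolding K_def using C0
    by (simp add: powr_minus_divide powr_half_sqrt)
  have pt: "normal_density 0 \<sigma> x * exp (t*(x+a)\<^sup>2) = K * normal_density \<mu>' \<sigma>' x" for x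
  proof -
    have E: "-(x-0)\<^sup>2/(2*\<sigma>\<^sup>2) + t*(x+a)\<^sup>2 = t*a\<^sup>2/C + (-(x-\<mu>')\<^sup>2/(2*\<sigma>'\<^sup>2))"
    proof -
      have tC: "t = (1-C)/(2*\<sigma>\<^sup>2)" unfolding C_def using s by (simp add: field_simps)
      have mC: "\<mu>' = (1-C)*a/C" unfolding \<mu>'_def C_def by simp
      show ?thesis unfolding s2 mC tC using C0 s
        by (simp add: field_simps power2_eq_square)
    qed
    have Q: "1 / sqrt (2*pi*\<sigma>\<^sup>2) = 1 / sqrt C * (1 / sqrt (2*pi*\<sigma>'\<^sup>2))"
      unfolding s2 using C0 s by (simp add: real_sqrt_divide real_sqrt_mult)
    have "normal_density 0 \<sigma> x * exp (t*(x+a)\<^sup>2) = 1 / sqrt (2*pi*\<sigma>\<^sup>2) * exp (-(x-0)\<^sup>2/(2*\<sigma>\<^sup>2) + t*(x+a)\<^sup>2)"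
      unfolding normal_density_def exp_add by simp
    also have "\<dots> = K * normal_density \<mu>' \<sigma>' x"
      unfolding E Q exp_add normal_density_def K_def by simp
    finally show ?thesis .
  qed
  have K0: "K \<ge> 0" unfolding K_def using C0 by simp
  have "(\<integral>\<^sup>+x. ennreal (exp (t*(x+a)\<^sup>2)) \<partial>density lborel (\<lambda>x. ennreal (normal_density 0 \<sigma> x)))
     = (\<integral>\<^sup>+x. ennreal (normal_density 0 \<sigma> x) * ennreal (exp (t*(x+a)\<^sup>2)) \<partial>lborel)"
    by (subst nn_integral_density) auto
  also have "\<dots> = (\<integral>\<^sup>+x. ennreal K * ennreal (normal_density \<mu>' \<sigma>' x) \<partial>lborel)"
    by (intro nn_integral_cong) (simp add: ennreal_mult''[symmetric] pt K0 flip: ennreal_mult)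
  also have "\<dots> = ennreal K"
    using s'0 by (subst nn_integral_cmult) (auto simp: nn_integral_normal_density)
  finally show ?thesis unfolding K C_def .
qed

lemma gauss_m2:
  fixes \<sigma> a :: real assumes s: "\<sigma> > 0"
  shows "(\<integral>\<^sup>+x. ennreal ((x+a)\<^sup>2) \<partial>density lborel (\<lambda>x. ennreal (normal_density 0 \<sigma> x)))
     = ennreal (\<sigma>\<^sup>2 + a\<^sup>2)"
proof -
  have h1: "has_bochner_integral lborel (\<lambda>x. normal_density 0 \<sigma> x * (x - 0) ^ (2 * 1)) (\<sigma>\<^sup>2)"
    using normal_moment_even[where \<sigma>=\<sigma> and k=1 and \<mu>=0] s by simp
  have h2: "has_bochner_integral lborel (\<lambda>x. 2*a*(normal_density 0 \<sigma> x * x)) (2*a*0)"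
    using normal_moment_nz_1[where \<sigma>=\<sigma> and \<mu>=0] s by (intro has_bochner_integral_mult_right) auto
  have h3: "has_bochner_integral lborel (\<lambda>x. a\<^sup>2 * normal_density 0 \<sigma> x) (a\<^sup>2 * 1)"
    using s by (intro has_bochner_integral_mult_right) (simp add: has_bochner_integral_iff)
  have "has_bochner_integral lborel (\<lambda>x. normal_density 0 \<sigma> x * (x - 0) ^ (2 * 1) + 2*a*(normal_density 0 \<sigma> x * x)
      + a\<^sup>2 * normal_density 0 \<sigma> x) (\<sigma>\<^sup>2 + 2*a*0 + a\<^sup>2 * 1)"
    by (intro has_bochner_integral_add h1 h2 h3)
  hence H: "has_bochner_integral lborel (\<lambda>x. normal_density 0 \<sigma> x * (x+a)\<^sup>2) (\<sigma>\<^sup>2 + a\<^sup>2)"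
    by (rule has_bochner_integral_cong[THEN iffD1, rotated -1]) (auto simp: power2_eq_square algebra_simps)
  have "(\<integral>\<^sup>+x. ennreal ((x+a)\<^sup>2) \<partial>density lborel (\<lambda>x. ennreal (normal_density 0 \<sigma> x)))
     = (\<integral>\<^sup>+x. ennreal (normal_density 0 \<sigma> x * (x+a)\<^sup>2) \<partial>lborel)"
    by (subst nn_integral_density) (auto simp: ennreal_mult''[symmetric] intro!: nn_integral_cong)
  also have "\<dots> = ennreal (\<sigma>\<^sup>2 + a\<^sup>2)"
    using H by (subst nn_integral_eq_integral) (auto simp: has_bochner_integral_iff)
  finally show ?thesis .
qed

lemma prod_J:
  fixes f :: "nat + nat + unit \<Rightarrow> 'b::comm_monoid_mult"
  assumes "finite A"
  shows "(\<Prod>k\<in>Inl ` A \<union> (Inr \<circ> Inl) ` A. f k) = (\<Prod>i\<in>A. f (Inl i) * f (Inr (Inl i)))"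
proof -
  have "(\<Prod>k\<in>Inl ` A \<union> (Inr \<circ> Inl) ` A. f k) = (\<Prod>k\<in>Inl ` A. f k) * (\<Prod>k\<in>(Inr \<circ> Inl) ` A. f k)"
    using assms by (intro prod.union_disjoint) auto
  also have "\<dots> = (\<Prod>i\<in>A. f (Inl i)) * (\<Prod>i\<in>A. f (Inr (Inl i)))"
    by (subst (1 2) prod.reindex) (auto simp: inj_on_def)
  finally show ?thesis by (simp add: prod.distrib)
qed

lemma final_alg:
  fixes \<mu> :: nat and \<sigma>x \<sigma>y m \<gamma>bar s p2 q2 EW c Cx Cy A K \<kappa> \<rho> \<eta> :: real
  assumes pos: "\<mu> > 0" "\<sigma>x > 0" "\<sigma>y > 0" "m > 0" "\<gamma>bar > 0" "p2 \<ge> 0" "q2 > 0" "s \<le> 0"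
    and EW: "EW = real \<mu>*(\<sigma>x\<^sup>2+\<sigma>y\<^sup>2) + (p2+q2)"
    and c: "c = s * \<gamma>bar / EW"
    and Cx: "Cx = 1 - 2*c*\<sigma>x\<^sup>2" and Cy: "Cy = 1 - 2*c*\<sigma>y\<^sup>2"
    and Cx1: "Cx \<ge> 1" and Cy1: "Cy \<ge> 1"
    and A: "A = c * (p2/Cx + q2/Cy)"
    and K: "K = Cx powr (-(real \<mu>)/2) * Cy powr (-(real \<mu>)/2)"
    and \<kappa>: "\<kappa> = (p2 + q2) / (real \<mu> * (\<sigma>x\<^sup>2 + \<sigma>y\<^sup>2))"
    and \<rho>: "\<rho> = sqrt (p2 / q2)"
    and \<eta>: "\<eta> = \<sigma>x\<^sup>2 / \<sigma>y\<^sup>2"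
  shows "K * (m / (m - A)) powr m =
        1 / ((1 - 2 * \<eta> * \<gamma>bar * s / (real \<mu> * (1 + \<eta>) * (1 + \<kappa>))) powr (real \<mu> / 2)
             * (1 - 2 * \<gamma>bar * s / (real \<mu> * (1 + \<eta>) * (1 + \<kappa>))) powr (real \<mu> / 2))
        * (1 - 1 / m * (real \<mu> * \<kappa> * (\<rho>\<^sup>2 / (1 + \<rho>\<^sup>2)) * (1 + \<eta>) * \<gamma>bar * s
                          / ((1 + \<eta>) * (1 + \<kappa>) * real \<mu> - 2 * \<eta> * \<gamma>bar * s)
                        + real \<mu> * \<kappa> * (1 / (1 + \<rho>\<^sup>2)) * (1 + \<eta>) * \<gamma>bar * s
                          / ((1 + \<eta>) * (1 + \<kappa>) * real \<mu> - 2 * \<gamma>bar * s))) powr (- m)"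
proof -
  have S0: "\<sigma>x\<^sup>2 + \<sigma>y\<^sup>2 > 0" using pos by (simp add: add_pos_pos)
  have S0': "\<sigma>x\<^sup>2 + \<sigma>y\<^sup>2 \<noteq> 0" using S0 by linarith
  have EW0: "EW > 0" using EW pos S0 by (simp add: add_pos_nonneg)
  have sy0: "\<sigma>y\<^sup>2 > 0" using pos by simp
  have f1: "1 + \<eta> = (\<sigma>x\<^sup>2+\<sigma>y\<^sup>2)/\<sigma>y\<^sup>2" unfolding \<eta> using sy0 by (simp add: field_simps)
  have f5: "real \<mu> * \<kappa> = (p2+q2)/(\<sigma>x\<^sup>2+\<sigma>y\<^sup>2)" unfolding \<kappa> using pos by simp
  have f3: "real \<mu> * (1 + \<eta>) * (1 + \<kappa>) = EW/\<sigma>y\<^sup>2"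
  proof -
    have "real \<mu> * (1 + \<kappa>) = (real \<mu> * (\<sigma>x\<^sup>2+\<sigma>y\<^sup>2) + (p2+q2))/(\<sigma>x\<^sup>2+\<sigma>y\<^sup>2)"
      using f5 S0' by (simp add: field_simps)
    thus ?thesis unfolding f1 EW using S0 sy0 by (simp add: field_simps)
  qed
  have f4: "\<rho>\<^sup>2 = p2/q2" unfolding \<rho> using pos by simp
  have pq0: "p2 + q2 \<noteq> 0" using pos by linarith
  have r1: "\<rho>\<^sup>2 / (1 + \<rho>\<^sup>2) = p2/(p2+q2)" unfolding f4 using pos pq0 by (simp add: field_simps)
  have r2: "1 / (1 + \<rho>\<^sup>2) = q2/(p2+q2)" unfolding f4 using pos pq0 by (simp add: field_simps)
  have aux: "a / S * (p / a) * (S / b) = p / b" if "a \<noteq> 0" "S \<noteq> 0" "b \<noteq> 0" for a S b p :: real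
    using that by (simp add: field_simps)
  have e1: "1 - 2 * \<eta> * \<gamma>bar * s / (real \<mu> * (1 + \<eta>) * (1 + \<kappa>)) = Cx"
    unfolding f3 unfolding Cx c \<eta> using sy0 EW0 by (simp add: field_simps)
  have e2: "1 - 2 * \<gamma>bar * s / (real \<mu> * (1 + \<eta>) * (1 + \<kappa>)) = Cy"
    unfolding f3 Cy c using sy0 EW0 by (simp add: field_simps)
  have d1: "(1 + \<eta>) * (1 + \<kappa>) * real \<mu> - 2 * \<eta> * \<gamma>bar * s = EW * Cx / \<sigma>y\<^sup>2"
    using f3 e1 EW0 sy0 by (simp add: field_simps)
  have d2: "(1 + \<eta>) * (1 + \<kappa>) * real \<mu> - 2 * \<gamma>bar * s = EW * Cy / \<sigma>y\<^sup>2"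
    using f3 e2 EW0 sy0 by (simp add: field_simps)
  have n1: "real \<mu> * \<kappa> * (\<rho>\<^sup>2 / (1 + \<rho>\<^sup>2)) * (1 + \<eta>) = p2 / \<sigma>y\<^sup>2"
    unfolding r1 f5 f1 using aux[OF pq0 S0', of "\<sigma>y\<^sup>2" p2] sy0 by simp
  have n2: "real \<mu> * \<kappa> * (1 / (1 + \<rho>\<^sup>2)) * (1 + \<eta>) = q2 / \<sigma>y\<^sup>2"
    unfolding r2 f5 f1 using aux[OF pq0 S0', of "\<sigma>y\<^sup>2" q2] sy0 by simp
  have T: "real \<mu> * \<kappa> * (\<rho>\<^sup>2 / (1 + \<rho>\<^sup>2)) * (1 + \<eta>) * \<gamma>bar * s
                          / ((1 + \<eta>) * (1 + \<kappa>) * real \<mu> - 2 * \<eta> * \<gamma>bar * s)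
                        + real \<mu> * \<kappa> * (1 / (1 + \<rho>\<^sup>2)) * (1 + \<eta>) * \<gamma>bar * s
                          / ((1 + \<eta>) * (1 + \<kappa>) * real \<mu> - 2 * \<gamma>bar * s) = A"
    unfolding d1 d2 n1 n2 A c using Cx1 Cy1 EW0 sy0 by (simp add: field_simps)
  have c0: "c \<le> 0" unfolding c using pos EW0 by (simp add: divide_nonpos_pos mult_nonpos_nonneg)
  have A0: "A \<le> 0" unfolding A using c0 pos Cx1 Cy1
    by (intro mult_nonpos_nonneg add_nonneg_nonneg divide_nonneg_pos) auto
  have mA: "m - A > 0" using A0 pos by linarith
  have P1: "(1 - 1 / m * A) powr (-m) = (m/(m-A)) powr m"
  proof -
    have "1 - 1 / m * A = (m-A)/m" using pos by (simp add: field_simps)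
    thus ?thesis using mA pos by (simp add: powr_minus_divide powr_divide)
  qed
  have P2: "1 / (Cx powr (real \<mu> / 2) * Cy powr (real \<mu> / 2)) = K"
    unfolding K using Cx1 Cy1 by (simp add: powr_minus_divide)
  show ?thesis unfolding T e1 e2 P1 P2 ..

qed

theorem lemma1:
  fixes M :: "'a measure"
    and \<mu> :: nat and \<sigma>x \<sigma>y m \<gamma>bar s :: real
    and p q :: "nat \<Rightarrow> real"
    and X Y :: "nat \<Rightarrow> 'a \<Rightarrow> real" and \<xi> :: "'a \<Rightarrow> real"
  assumes "prob_space M"
    and "\<mu> > 0" and "\<sigma>x > 0" and "\<sigma>y > 0" and "m > 0" and "\<gamma>bar > 0"
    and "(\<Sum>i<\<mu>. (q i)\<^sup>2) > 0"
    and "\<And>i. i < \<mu> \<Longrightarrow> distributed M lborel (X i) (normal_density 0 \<sigma>x)"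
    and "\<And>i. i < \<mu> \<Longrightarrow> distributed M lborel (Y i) (normal_density 0 \<sigma>y)"
    and "distributed M lborel \<xi> (nakagami_density m)"
    and "prob_space.indep_vars M (\<lambda>_. borel) (fb_family X Y \<xi>) (fb_index \<mu>)"
    and "s \<le> 0"
  shows
    "let p2 = (\<Sum>i<\<mu>. (p i)\<^sup>2); q2 = (\<Sum>i<\<mu>. (q i)\<^sup>2);
         W = (\<lambda>\<omega>. \<Sum>i<\<mu>. (X i \<omega> + p i * \<xi> \<omega>)\<^sup>2 + (Y i \<omega> + q i * \<xi> \<omega>)\<^sup>2);
         \<gamma> = (\<lambda>\<omega>. \<gamma>bar * W \<omega> / prob_space.expectation M W);
         \<kappa> = (p2 + q2) / (real \<mu> * (\<sigma>x\<^sup>2 + \<sigma>y\<^sup>2));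
         \<rho> = sqrt (p2 / q2);
         \<eta> = \<sigma>x\<^sup>2 / \<sigma>y\<^sup>2
     in prob_space.expectation M (\<lambda>\<omega>. exp (s * \<gamma> \<omega>)) =
        1 / ((1 - 2 * \<eta> * \<gamma>bar * s / (real \<mu> * (1 + \<eta>) * (1 + \<kappa>))) powr (real \<mu> / 2)
             * (1 - 2 * \<gamma>bar * s / (real \<mu> * (1 + \<eta>) * (1 + \<kappa>))) powr (real \<mu> / 2))
        * (1 - 1 / m * (real \<mu> * \<kappa> * (\<rho>\<^sup>2 / (1 + \<rho>\<^sup>2)) * (1 + \<eta>) * \<gamma>bar * s
                          / ((1 + \<eta>) * (1 + \<kappa>) * real \<mu> - 2 * \<eta> * \<gamma>bar * s)
                        + real \<mu> * \<kappa> * (1 / (1 + \<rho>\<^sup>2)) * (1 + \<eta>) * \<gamma>bar * s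
                          / ((1 + \<eta>) * (1 + \<kappa>) * real \<mu> - 2 * \<gamma>bar * s))) powr (- m)"
proof -
  interpret P: prob_space M by fact
  define I where "I = fb_index \<mu>"
  define k0 :: "nat + nat + unit" where "k0 = Inr (Inr ())"
  define J :: "(nat + nat + unit) set" where "J = Inl ` {..<\<mu>} \<union> (Inr \<circ> Inl) ` {..<\<mu>}"
  define F where "F = fb_family X Y \<xi>"
  define dens :: "nat + nat + unit \<Rightarrow> real \<Rightarrow> real" where
    "dens k = (case k of Inl _ \<Rightarrow> normal_density 0 \<sigma>x | Inr (Inl _) \<Rightarrow> normal_density 0 \<sigma>y
        | Inr (Inr _) \<Rightarrow> nakagami_density m)" for k
  define D where "D k = density lborel (\<lambda>x. ennreal (dens k x))" for k
  have IJ: "I = insert k0 J" "k0 \<notin> J" "finite J"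
    unfolding I_def fb_index_def J_def k0_def by auto
  have nak_distr: "distr M lborel \<xi> = density lborel (\<lambda>x. ennreal (nakagami_density m x))"
    using assms(10) by (simp add: distributed_def)
  have xi_meas: "\<xi> \<in> borel_measurable M"
    using assms(10) by (simp add: distributed_def)
  have probD: "prob_space (D k)" for k
  proof (cases k)
    case (Inl i) thus ?thesis unfolding D_def dens_def using assms(3,4) by (simp add: prob_space_normal_density)
  next
    case (Inr j) thus ?thesis
    proof (cases j)
      case (Inl i) thus ?thesis using Inr unfolding D_def dens_def using assms(3,4) by (simp add: prob_space_normal_density)
    next
      case (Inr u)
      have "prob_space (distr M lborel \<xi>)" using xi_meas by (intro P.prob_space_distr) simp
      thus ?thesis using Inr \<open>k = Inr j\<close> unfolding D_def dens_def nak_distr by simp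
    qed
  qed
  interpret DP: prob_space "D k" for k by (rule probD)
  interpret PS: product_sigma_finite D by unfold_locales
  have sets_D: "sets (D k) = sets borel" for k unfolding D_def by simp
  have Fmeas: "F k \<in> borel_measurable M" if "k \<in> I" for k
    using that assms(8,9) xi_meas unfolding I_def fb_index_def F_def fb_family_def
    by (auto simp: distributed_def)
  have Fdistr: "distr M borel (F k) = D k" if "k \<in> I" for k
  proof -
    have "distr M borel (F k) = distr M lborel (F k)" by (rule distr_cong) auto
    also have "\<dots> = D k"
      using that assms(8,9) nak_distr unfolding I_def fb_index_def F_def fb_family_def D_def dens_def
      by (auto simp: distributed_def)
    finally show ?thesis .
  qed
  define V where "V \<omega> = (\<lambda>k\<in>I. F k \<omega>)" for \<omega>
  have Vmeas: "V \<in> measurable M (PiM I (\<lambda>_. borel))"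
    unfolding V_def by (rule measurable_restrict) (rule Fmeas)
  have Vdistr: "distr M (PiM I (\<lambda>_. borel)) V = PiM I D"
  proof -
    have ind: "P.indep_vars (\<lambda>_. borel) F I" using assms(11) unfolding F_def I_def .
    have "distr M (PiM I (\<lambda>_. borel)) V = PiM I (\<lambda>k. distr M borel (F k))"
      unfolding V_def using ind by (subst (asm) P.indep_vars_iff_distr_eq_PiM') (auto simp: IJ Fmeas)
    also have "\<dots> = PiM I D" by (rule PiM_cong) (auto simp: Fdistr)
    finally show ?thesis .
  qed
  have Vdistr': "distr M (PiM I (\<lambda>_. borel)) V = PiM (insert k0 J) D"
    using Vdistr unfolding IJ(1) .
  have transfer: "(\<integral>\<^sup>+\<omega>. g (V \<omega>) \<partial>M) = (\<integral>\<^sup>+y. \<integral>\<^sup>+x. g (x(k0:=y)) \<partial>PiM J D \<partial>D k0)"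
    if gm: "g \<in> borel_measurable (PiM I (\<lambda>_. borel))" for g
  proof -
    have "(\<integral>\<^sup>+\<omega>. g (V \<omega>) \<partial>M) = (\<integral>\<^sup>+v. g v \<partial>distr M (PiM I (\<lambda>_. borel)) V)"
      using gm Vmeas by (subst nn_integral_distr) auto
    also have "\<dots> = (\<integral>\<^sup>+v. g v \<partial>PiM (insert k0 J) D)"
      unfolding Vdistr' ..
    also have "\<dots> = (\<integral>\<^sup>+y. \<integral>\<^sup>+x. g (x(k0:=y)) \<partial>PiM J D \<partial>D k0)"
    proof (rule PS.product_nn_integral_insert_rev)
      have "sets (PiM (insert k0 J) D) = sets (PiM I (\<lambda>_. borel))"
        by (rule sets_PiM_cong) (auto simp: IJ sets_D)
      then show "g \<in> borel_measurable (PiM (insert k0 J) D)"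
        using gm measurable_cong_sets[OF _ refl] by blast
    qed (use IJ in auto)
    finally show ?thesis .
  qed
  have comp: "(\<integral>\<^sup>+x. h (x k) \<partial>PiM J D) = (\<integral>\<^sup>+u. h u \<partial>D k)"
    if "k \<in> J" "h \<in> borel_measurable borel" for k h
  proof -
    have "(\<integral>\<^sup>+u. h u \<partial>D k) = (\<integral>\<^sup>+u. h u \<partial>distr (PiM J D) (D k) (\<lambda>\<omega>. \<omega> k))"
      using distr_PiM_component[of J D k] that probD by simp
    also have "\<dots> = (\<integral>\<^sup>+x. h (x k) \<partial>PiM J D)"
    proof -
      have m1: "(\<lambda>\<omega>. \<omega> k) \<in> measurable (PiM J D) (D k)" using that(1) by (rule measurable_component_singleton)
      have m2: "h \<in> borel_measurable (D k)" using that(2) by (simp add: measurable_cong_sets[OF sets_D refl])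
      show ?thesis by (rule nn_integral_distr[OF m1]) (simp add: m2)
    qed
    finally show ?thesis ..
  qed
  define Wf where "Wf v = (\<Sum>i<\<mu>. (v (Inl i) + p i * v k0)\<^sup>2 + (v (Inr (Inl i)) + q i * v k0)\<^sup>2)" for v :: "nat + nat + unit \<Rightarrow> real"
  define W where "W \<omega> = (\<Sum>i<\<mu>. (X i \<omega> + p i * \<xi> \<omega>)\<^sup>2 + (Y i \<omega> + q i * \<xi> \<omega>)\<^sup>2)" for \<omega>
  define p2 where "p2 = (\<Sum>i<\<mu>. (p i)\<^sup>2)"
  define q2 where "q2 = (\<Sum>i<\<mu>. (q i)\<^sup>2)"
  have WV: "W \<omega> = Wf (V \<omega>)" for \<omega>
    unfolding W_def Wf_def V_def
    by (intro sum.cong) (auto simp: I_def fb_index_def k0_def F_def fb_family_def)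
  have cI: "(\<lambda>v. v k) \<in> borel_measurable (PiM I (\<lambda>_. borel))" if "k \<in> I" for k
    using that by (rule measurable_component_singleton)
  have Inl_I: "Inl i \<in> I" "Inr (Inl i) \<in> I" if "i < \<mu>" for i
    using that unfolding I_def fb_index_def by auto
  have k0_I: "k0 \<in> I" unfolding I_def fb_index_def k0_def by auto
  have Wf_meas: "Wf \<in> borel_measurable (PiM I (\<lambda>_. borel))"
    unfolding Wf_def
    by (intro borel_measurable_sum borel_measurable_add borel_measurable_power borel_measurable_times
        borel_measurable_const cI k0_I Inl_I) auto
  have Jmem: "Inl i \<in> J" "Inr (Inl i) \<in> J" if "i < \<mu>" for i
    using that unfolding J_def by auto
  have DInl: "D (Inl i) = density lborel (\<lambda>x. ennreal (normal_density 0 \<sigma>x x))" for i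
    by (simp add: D_def dens_def)
  have DInr: "D (Inr (Inl i)) = density lborel (\<lambda>x. ennreal (normal_density 0 \<sigma>y x))" for i
    by (simp add: D_def dens_def)
  have Dk0: "D k0 = density lborel (\<lambda>x. ennreal (nakagami_density m x))"
    by (simp add: D_def dens_def k0_def)
  have cJ: "(\<lambda>x. h (x k)) \<in> borel_measurable (PiM J D)" if "k \<in> J" "h \<in> borel_measurable borel" for k and h :: "real \<Rightarrow> ennreal"
  proof -
    have m1: "(\<lambda>\<omega>. \<omega> k) \<in> measurable (PiM J D) (D k)" using that(1) by (rule measurable_component_singleton)
    have m2: "h \<in> borel_measurable (D k)" using that(2) by (simp add: measurable_cong_sets[OF sets_D refl])
    show ?thesis using measurable_comp[OF m1 m2] by (simp add: comp_def)
  qed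
  have sq_int: "(\<integral>\<^sup>+x. ennreal ((x k + c)\<^sup>2) \<partial>PiM J D) = ennreal (\<sigma>\<^sup>2 + c\<^sup>2)"
    if "k \<in> J" "D k = density lborel (\<lambda>x. ennreal (normal_density 0 \<sigma> x))" "\<sigma> > 0" for k c \<sigma>
    using that by (subst comp[OF that(1)]) (auto simp: gauss_m2)
  have sqm: "(\<lambda>x. ennreal ((x k + c)\<^sup>2)) \<in> borel_measurable (PiM J D)" if "k \<in> J" for k c
  proof -
    have "(\<lambda>u. ennreal ((u + c)\<^sup>2)) \<in> borel_measurable borel" by measurable
    from cJ[OF that this] show ?thesis .
  qed
  have inner_W: "(\<integral>\<^sup>+x. ennreal (Wf (x(k0:=y))) \<partial>PiM J D) = ennreal (real \<mu>*(\<sigma>x\<^sup>2+\<sigma>y\<^sup>2) + (p2+q2)*y\<^sup>2)" for y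
  proof -
    have "(\<integral>\<^sup>+x. ennreal (Wf (x(k0:=y))) \<partial>PiM J D) =
       (\<integral>\<^sup>+x. (\<Sum>i<\<mu>. ennreal ((x (Inl i) + p i * y)\<^sup>2) + ennreal ((x (Inr (Inl i)) + q i * y)\<^sup>2)) \<partial>PiM J D)"
      by (intro nn_integral_cong) (simp add: Wf_def k0_def flip: ennreal_plus)
    also have "\<dots> = (\<Sum>i<\<mu>. (\<integral>\<^sup>+x. ennreal ((x (Inl i) + p i * y)\<^sup>2) \<partial>PiM J D) + (\<integral>\<^sup>+x. ennreal ((x (Inr (Inl i)) + q i * y)\<^sup>2) \<partial>PiM J D))"
    proof (subst nn_integral_sum)
      fix i assume "i \<in> {..<\<mu>}"
      hence i: "i < \<mu>" by simp
      show "(\<lambda>x. ennreal ((x (Inl i) + p i * y)\<^sup>2) + ennreal ((x (Inr (Inl i)) + q i * y)\<^sup>2)) \<in> borel_measurable (PiM J D)"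
        by (rule borel_measurable_add) (rule sqm, rule Jmem[OF i])+
    next
      show "(\<Sum>i<\<mu>. \<integral>\<^sup>+x. ennreal ((x (Inl i) + p i * y)\<^sup>2) + ennreal ((x (Inr (Inl i)) + q i * y)\<^sup>2) \<partial>PiM J D) =
        (\<Sum>i<\<mu>. (\<integral>\<^sup>+x. ennreal ((x (Inl i) + p i * y)\<^sup>2) \<partial>PiM J D) + (\<integral>\<^sup>+x. ennreal ((x (Inr (Inl i)) + q i * y)\<^sup>2) \<partial>PiM J D))"
      proof (rule sum.cong[OF refl])
        fix i assume "i \<in> {..<\<mu>}"
        hence i: "i < \<mu>" by simp
        show "(\<integral>\<^sup>+x. ennreal ((x (Inl i) + p i * y)\<^sup>2) + ennreal ((x (Inr (Inl i)) + q i * y)\<^sup>2) \<partial>PiM J D) =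
          (\<integral>\<^sup>+x. ennreal ((x (Inl i) + p i * y)\<^sup>2) \<partial>PiM J D) + (\<integral>\<^sup>+x. ennreal ((x (Inr (Inl i)) + q i * y)\<^sup>2) \<partial>PiM J D)"
          by (rule nn_integral_add) (rule sqm, rule Jmem[OF i])+
      qed
    qed
    also have "\<dots> = (\<Sum>i<\<mu>. ennreal (\<sigma>x\<^sup>2 + (p i * y)\<^sup>2) + ennreal (\<sigma>y\<^sup>2 + (q i * y)\<^sup>2))"
    proof (rule sum.cong[OF refl])
      fix i assume "i \<in> {..<\<mu>}"
      hence i: "i < \<mu>" by simp
      show "(\<integral>\<^sup>+x. ennreal ((x (Inl i) + p i * y)\<^sup>2) \<partial>PiM J D) + (\<integral>\<^sup>+x. ennreal ((x (Inr (Inl i)) + q i * y)\<^sup>2) \<partial>PiM J D)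
         = ennreal (\<sigma>x\<^sup>2 + (p i * y)\<^sup>2) + ennreal (\<sigma>y\<^sup>2 + (q i * y)\<^sup>2)"
        using sq_int[OF Jmem(1)[OF i] DInl assms(3)] sq_int[OF Jmem(2)[OF i] DInr assms(4)] by simp
    qed
    also have "\<dots> = ennreal (\<Sum>i<\<mu>. (\<sigma>x\<^sup>2 + (p i * y)\<^sup>2) + (\<sigma>y\<^sup>2 + (q i * y)\<^sup>2))"
      by (subst sum_ennreal[symmetric]) (auto intro!: sum.cong simp: ennreal_plus)
    also have "(\<Sum>i<\<mu>. (\<sigma>x\<^sup>2 + (p i * y)\<^sup>2) + (\<sigma>y\<^sup>2 + (q i * y)\<^sup>2)) = real \<mu>*(\<sigma>x\<^sup>2+\<sigma>y\<^sup>2) + (p2+q2)*y\<^sup>2"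
      by (simp add: sum.distrib power_mult_distrib p2_def q2_def sum_distrib_right sum_distrib_left algebra_simps)
    finally show ?thesis .
  qed
  define EW where "EW = real \<mu>*(\<sigma>x\<^sup>2+\<sigma>y\<^sup>2) + (p2+q2)"
  have p2q2: "p2 \<ge> 0" "q2 > 0" unfolding p2_def q2_def using assms(7) by (auto intro: sum_nonneg)
  have EWpos: "EW > 0" unfolding EW_def using assms(2,3,4) p2q2 by (simp add: add_pos_nonneg)
  have W_meas: "W \<in> borel_measurable M"
  proof -
    have "(\<lambda>\<omega>. Wf (V \<omega>)) \<in> borel_measurable M" using measurable_comp[OF Vmeas Wf_meas] by (simp add: comp_def)
    moreover have "W = (\<lambda>\<omega>. Wf (V \<omega>))" by (rule ext) (rule WV)
    ultimately show ?thesis by simp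
  qed
  have EW_nn: "(\<integral>\<^sup>+\<omega>. ennreal (W \<omega>) \<partial>M) = ennreal EW"
  proof -
    have gm: "(\<lambda>v. ennreal (Wf v)) \<in> borel_measurable (PiM I (\<lambda>_. borel))" using Wf_meas by measurable
    have "(\<integral>\<^sup>+\<omega>. ennreal (W \<omega>) \<partial>M) = (\<integral>\<^sup>+\<omega>. ennreal (Wf (V \<omega>)) \<partial>M)" by (simp add: WV)
    also have "\<dots> = (\<integral>\<^sup>+y. \<integral>\<^sup>+x. ennreal (Wf (x(k0:=y))) \<partial>PiM J D \<partial>D k0)"
      by (rule transfer[OF gm])
    also have "\<dots> = (\<integral>\<^sup>+y. ennreal (real \<mu>*(\<sigma>x\<^sup>2+\<sigma>y\<^sup>2)) + ennreal (p2+q2) * ennreal (y\<^sup>2) \<partial>D k0)"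
      unfolding inner_W using p2q2 by (intro nn_integral_cong) (simp add: ennreal_plus ennreal_mult'')
    also have "\<dots> = ennreal (real \<mu>*(\<sigma>x\<^sup>2+\<sigma>y\<^sup>2)) * 1 + ennreal (p2+q2) * 1"
    proof -
      have e1: "emeasure (density lborel (\<lambda>x. ennreal (nakagami_density m x))) UNIV = 1"
        using DP.emeasure_space_1[of k0] unfolding Dk0 by simp
      show ?thesis
        by (subst nn_integral_add) (auto simp: nn_integral_cmult Dk0 nakagami_moment2[OF assms(5)] e1)
    qed
    also have "\<dots> = ennreal EW" unfolding EW_def using p2q2 by (simp add: ennreal_plus)
    finally show ?thesis .
  qed
  have EWval: "integral\<^sup>L M W = EW"
    using EW_nn W_meas EWpos by (subst integral_eq_nn_integral) (auto simp: W_def intro!: AE_I2 sum_nonneg add_nonneg_nonneg)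
  define c where "c = s * \<gamma>bar / EW"
  have c0: "c \<le> 0" unfolding c_def using assms(6,12) EWpos
    by (simp add: divide_nonpos_pos mult_nonpos_nonneg)
  define G where "G \<sigma> a = (1 - 2*c*\<sigma>\<^sup>2) powr (-1/2) * exp (c*a\<^sup>2/(1 - 2*c*\<sigma>\<^sup>2))" for \<sigma> a :: real
  define Cx where "Cx = 1 - 2*c*\<sigma>x\<^sup>2"
  define Cy where "Cy = 1 - 2*c*\<sigma>y\<^sup>2"
  have Cx1: "Cx \<ge> 1" unfolding Cx_def using c0 by (simp add: mult_nonpos_nonneg)
  have Cy1: "Cy \<ge> 1" unfolding Cy_def using c0 by (simp add: mult_nonpos_nonneg)
  define A where "A = c * (p2/Cx + q2/Cy)"
  define K where "K = Cx powr (-(real \<mu>)/2) * Cy powr (-(real \<mu>)/2)"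
  define coef where "coef k = (case k of Inl i \<Rightarrow> p i | Inr (Inl i) \<Rightarrow> q i | Inr (Inr _) \<Rightarrow> 0)" for k :: "nat + nat + unit"
  have prodG: "(\<Prod>i<\<mu>. G \<sigma>x (p i * y) * G \<sigma>y (q i * y)) = K * exp (A * y\<^sup>2)" for y
  proof -
    have "(\<Prod>i<\<mu>. G \<sigma>x (p i * y) * G \<sigma>y (q i * y)) =
       (\<Prod>i<\<mu>. (Cx powr (-1/2) * Cy powr (-1/2)) * exp (c*(p i * y)\<^sup>2/Cx + c*(q i * y)\<^sup>2/Cy))"
      unfolding G_def Cx_def Cy_def by (intro prod.cong refl) (simp add: exp_add algebra_simps)
    also have "\<dots> = (Cx powr (-1/2) * Cy powr (-1/2)) ^ \<mu> * exp (\<Sum>i<\<mu>. c*(p i * y)\<^sup>2/Cx + c*(q i * y)\<^sup>2/Cy)"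
      by (simp add: prod.distrib exp_sum)
    also have "(Cx powr (-1/2) * Cy powr (-1/2)) ^ \<mu> = K"
      unfolding K_def power_mult_distrib using Cx1 Cy1 by (simp add: powr_power)
    also have "(\<Sum>i<\<mu>. c*(p i * y)\<^sup>2/Cx + c*(q i * y)\<^sup>2/Cy) = A * y\<^sup>2"
      unfolding A_def p2_def q2_def
      by (simp add: sum.distrib power_mult_distrib sum_divide_distrib[symmetric] sum_distrib_left[symmetric]
          sum_distrib_right[symmetric] algebra_simps)
    finally show ?thesis .
  qed
  have inner_G: "(\<integral>\<^sup>+x. ennreal (exp (c * Wf (x(k0:=y)))) \<partial>PiM J D) = ennreal (K * exp (A * y\<^sup>2))" for y
  proof -
    define h where "h k u = ennreal (exp (c * (u + coef k * y)\<^sup>2))" for k u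
    have hm: "h k \<in> borel_measurable (D k)" for k
      unfolding h_def measurable_cong_sets[OF sets_D refl] by measurable
    have "(\<integral>\<^sup>+x. ennreal (exp (c * Wf (x(k0:=y)))) \<partial>PiM J D) = (\<integral>\<^sup>+x. (\<Prod>k\<in>J. h k (x k)) \<partial>PiM J D)"
    proof (intro nn_integral_cong)
      fix x :: "nat + nat + unit \<Rightarrow> real"
      have "(\<Prod>k\<in>J. h k (x k)) = (\<Prod>i<\<mu>. h (Inl i) (x (Inl i)) * h (Inr (Inl i)) (x (Inr (Inl i))))"
        unfolding J_def by (rule prod_J) simp
      also have "\<dots> = (\<Prod>i<\<mu>. ennreal (exp (c * (x (Inl i) + p i * y)\<^sup>2) * exp (c * (x (Inr (Inl i)) + q i * y)\<^sup>2)))"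
        unfolding h_def coef_def by (simp add: ennreal_mult'')
      also have "\<dots> = ennreal (\<Prod>i<\<mu>. exp (c * (x (Inl i) + p i * y)\<^sup>2) * exp (c * (x (Inr (Inl i)) + q i * y)\<^sup>2))"
        by (rule prod_ennreal) simp
      also have "(\<Prod>i<\<mu>. exp (c * (x (Inl i) + p i * y)\<^sup>2) * exp (c * (x (Inr (Inl i)) + q i * y)\<^sup>2)) = exp (c * Wf (x(k0:=y)))"
        unfolding Wf_def k0_def by (simp add: exp_sum sum_distrib_left distrib_left exp_add)
      finally show "ennreal (exp (c * Wf (x(k0:=y)))) = (\<Prod>k\<in>J. h k (x k))" ..
    qed
    also have "\<dots> = (\<Prod>k\<in>J. \<integral>\<^sup>+u. h k u \<partial>D k)"
      using IJ(3) hm by (rule PS.product_nn_integral_prod)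
    also have "\<dots> = (\<Prod>i<\<mu>. (\<integral>\<^sup>+u. h (Inl i) u \<partial>D (Inl i)) * (\<integral>\<^sup>+u. h (Inr (Inl i)) u \<partial>D (Inr (Inl i))))"
      unfolding J_def by (rule prod_J) simp
    also have "\<dots> = (\<Prod>i<\<mu>. ennreal (G \<sigma>x (p i * y)) * ennreal (G \<sigma>y (q i * y)))"
      unfolding h_def coef_def DInl DInr G_def using assms(3,4) c0 by (simp add: gauss_mgf)
    also have "\<dots> = ennreal (\<Prod>i<\<mu>. G \<sigma>x (p i * y) * G \<sigma>y (q i * y))"
      by (subst prod_ennreal[symmetric]) (auto simp: G_def ennreal_mult'')
    finally show ?thesis unfolding prodG .
  qed
  have A0: "A \<le> 0" unfolding A_def using c0 p2q2 Cx1 Cy1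
    by (intro mult_nonpos_nonneg add_nonneg_nonneg divide_nonneg_pos) auto
  have K0: "K \<ge> 0" unfolding K_def by simp
  have MGF_nn: "(\<integral>\<^sup>+\<omega>. ennreal (exp (c * W \<omega>)) \<partial>M) = ennreal (K * (m/(m-A)) powr m)"
  proof -
    have gm: "(\<lambda>v. ennreal (exp (c * Wf v))) \<in> borel_measurable (PiM I (\<lambda>_. borel))" using Wf_meas by measurable
    have "(\<integral>\<^sup>+\<omega>. ennreal (exp (c * W \<omega>)) \<partial>M) = (\<integral>\<^sup>+\<omega>. ennreal (exp (c * Wf (V \<omega>))) \<partial>M)" by (simp add: WV)
    also have "\<dots> = (\<integral>\<^sup>+y. \<integral>\<^sup>+x. ennreal (exp (c * Wf (x(k0:=y)))) \<partial>PiM J D \<partial>D k0)"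
      by (rule transfer[OF gm])
    also have "\<dots> = (\<integral>\<^sup>+y. ennreal K * ennreal (exp (A * y\<^sup>2)) \<partial>D k0)"
      unfolding inner_G using K0 by (intro nn_integral_cong) (simp add: ennreal_mult)
    also have "\<dots> = ennreal K * ennreal ((m/(m-A)) powr m)"
      using A0 assms(5) by (subst nn_integral_cmult) (auto simp: Dk0 nakagami_mgf)
    also have "\<dots> = ennreal (K * (m/(m-A)) powr m)" using K0 by (simp add: ennreal_mult)
    finally show ?thesis .
  qed
  have MGF: "integral\<^sup>L M (\<lambda>\<omega>. exp (s * (\<gamma>bar * W \<omega> / integral\<^sup>L M W))) = K * (m/(m-A)) powr m"
  proof -
    have "(\<lambda>\<omega>. exp (s * (\<gamma>bar * W \<omega> / integral\<^sup>L M W))) = (\<lambda>\<omega>. exp (c * W \<omega>))"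
      unfolding EWval c_def by (simp add: field_simps)
    moreover have "integral\<^sup>L M (\<lambda>\<omega>. exp (c * W \<omega>)) = K * (m/(m-A)) powr m"
      using MGF_nn W_meas K0 by (subst integral_eq_nn_integral) auto
    ultimately show ?thesis by simp
  qed
  have fin: "K * (m/(m-A)) powr m =
        1 / ((1 - 2 * (\<sigma>x\<^sup>2 / \<sigma>y\<^sup>2) * \<gamma>bar * s / (real \<mu> * (1 + \<sigma>x\<^sup>2 / \<sigma>y\<^sup>2) * (1 + (p2 + q2) / (real \<mu> * (\<sigma>x\<^sup>2 + \<sigma>y\<^sup>2))))) powr (real \<mu> / 2)
             * (1 - 2 * \<gamma>bar * s / (real \<mu> * (1 + \<sigma>x\<^sup>2 / \<sigma>y\<^sup>2) * (1 + (p2 + q2) / (real \<mu> * (\<sigma>x\<^sup>2 + \<sigma>y\<^sup>2))))) powr (real \<mu> / 2))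
        * (1 - 1 / m * (real \<mu> * ((p2 + q2) / (real \<mu> * (\<sigma>x\<^sup>2 + \<sigma>y\<^sup>2))) * ((sqrt (p2 / q2))\<^sup>2 / (1 + (sqrt (p2 / q2))\<^sup>2)) * (1 + \<sigma>x\<^sup>2 / \<sigma>y\<^sup>2) * \<gamma>bar * s
                          / ((1 + \<sigma>x\<^sup>2 / \<sigma>y\<^sup>2) * (1 + (p2 + q2) / (real \<mu> * (\<sigma>x\<^sup>2 + \<sigma>y\<^sup>2))) * real \<mu> - 2 * (\<sigma>x\<^sup>2 / \<sigma>y\<^sup>2) * \<gamma>bar * s)
                        + real \<mu> * ((p2 + q2) / (real \<mu> * (\<sigma>x\<^sup>2 + \<sigma>y\<^sup>2))) * (1 / (1 + (sqrt (p2 / q2))\<^sup>2)) * (1 + \<sigma>x\<^sup>2 / \<sigma>y\<^sup>2) * \<gamma>bar * s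
                          / ((1 + \<sigma>x\<^sup>2 / \<sigma>y\<^sup>2) * (1 + (p2 + q2) / (real \<mu> * (\<sigma>x\<^sup>2 + \<sigma>y\<^sup>2))) * real \<mu> - 2 * \<gamma>bar * s))) powr (- m)"
    by (rule final_alg[where EW=EW and c=c and Cx=Cx and Cy=Cy and A=A and K=K])
       (use assms(2-6,12) p2q2 Cx1 Cy1 in \<open>simp_all add: EW_def c_def Cx_def Cy_def A_def K_def\<close>)
  show ?thesis unfolding Let_def using MGF[unfolded fin] unfolding W_def p2_def q2_def .
qed

end
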